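(* Let $M$ be a finite $\Sigma$-Rickart right $R$-module. Then: (i) for all integers $m,n>0$, $M^{(m)}$ is $M^{(n)}$-Rickart; (ii) for every $K\in\mathrm{add}(M)$, the intersection of two finitely $M$-generated submodules of $K$ is finitely $M$-generated; (iii) the intersection of two finitely $M$-generated submodules of $M$ is finitely $M$-generated.
   Context: Modules are unitary right $R$-modules; $M^{(n)}$ is the direct sum of $n$ copies of $M$. $M$ is Rickart if $\ker\varphi$ is a direct summand of $M$ for all $\varphi\in\mathrm{End}_R(M)$; $M$ is finite $\Sigma$-Rickart if $M^{(n)}$ is Rickart for all $n>0$. A module $A$ is $N$-Rickart if $\ker\rho$ is a direct summand of $A$ for every $\rho\in\mathrm{Hom}_R(A,N)$. $\mathrm{add}(M)$ is the class of modules isomorphic to a direct summand of $M^{(n)}$ for some integer $n>0$. A module $N$ is finitely $M$-generated if there is an epimorphism $M^{(n)}\to N$ for some integer $n>0$. *)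

theory Defs
  imports Main
begin

record ('m, 'r) rmod =
  carrier :: "'m set"
  add :: "'m \<Rightarrow> 'm \<Rightarrow> 'm"
  zero :: 'm
  smul :: "'m \<Rightarrow> 'r \<Rightarrow> 'm"

definition rmodule :: "('m, 'r::ring_1) rmod \<Rightarrow> bool" where
  "rmodule M \<longleftrightarrow>
     zero M \<in> carrier M \<and>
     (\<forall>x\<in>carrier M. \<forall>y\<in>carrier M. add M x y \<in> carrier M) \<and>
     (\<forall>x\<in>carrier M. \<forall>r. smul M x r \<in> carrier M) \<and>
     (\<forall>x\<in>carrier M. \<forall>y\<in>carrier M. \<forall>z\<in>carrier M. add M (add M x y) z = add M x (add M y z)) \<and>
     (\<forall>x\<in>carrier M. \<forall>y\<in>carrier M. add M x y = add M y x) \<and>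
     (\<forall>x\<in>carrier M. add M (zero M) x = x) \<and>
     (\<forall>x\<in>carrier M. \<exists>y\<in>carrier M. add M x y = zero M) \<and>
     (\<forall>x\<in>carrier M. \<forall>y\<in>carrier M. \<forall>r. smul M (add M x y) r = add M (smul M x r) (smul M y r)) \<and>
     (\<forall>x\<in>carrier M. \<forall>r s. smul M x (r + s) = add M (smul M x r) (smul M x s)) \<and>
     (\<forall>x\<in>carrier M. \<forall>r s. smul M x (r * s) = smul M (smul M x r) s) \<and>
     (\<forall>x\<in>carrier M. smul M x 1 = x)"

definition submodule :: "('m, 'r) rmod \<Rightarrow> 'm set \<Rightarrow> bool" where
  "submodule M S \<longleftrightarrow> S \<subseteq> carrier M \<and> zero M \<in> S \<and>
     (\<forall>x\<in>S. \<forall>y\<in>S. add M x y \<in> S) \<and> (\<forall>x\<in>S. \<forall>r. smul M x r \<in> S)"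

definition subm :: "('m, 'r) rmod \<Rightarrow> 'm set \<Rightarrow> ('m, 'r) rmod" where
  "subm M S = M\<lparr>carrier := S\<rparr>"

definition direct_summand :: "('m, 'r) rmod \<Rightarrow> 'm set \<Rightarrow> bool" where
  "direct_summand M S \<longleftrightarrow> submodule M S \<and>
     (\<exists>T. submodule M T \<and> S \<inter> T = {zero M} \<and>
          (\<forall>x\<in>carrier M. \<exists>s\<in>S. \<exists>t\<in>T. x = add M s t))"

definition hom :: "('m, 'r) rmod \<Rightarrow> ('n, 'r) rmod \<Rightarrow> ('m \<Rightarrow> 'n) set" where
  "hom M N = {f. (\<forall>x\<in>carrier M. f x \<in> carrier N) \<and>
     (\<forall>x\<in>carrier M. \<forall>y\<in>carrier M. f (add M x y) = add N (f x) (f y)) \<and>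
     (\<forall>x\<in>carrier M. \<forall>r. f (smul M x r) = smul N (f x) r)}"

definition kernel :: "('m, 'r) rmod \<Rightarrow> ('n, 'r) rmod \<Rightarrow> ('m \<Rightarrow> 'n) \<Rightarrow> 'm set" where
  "kernel M N f = {x\<in>carrier M. f x = zero N}"

text \<open>The direct sum M^(n) of n copies of M, realised as functions on nat supported in {0..<n}.\<close>
definition dpow :: "('m, 'r) rmod \<Rightarrow> nat \<Rightarrow> (nat \<Rightarrow> 'm, 'r) rmod" where
  "dpow M n = \<lparr>carrier = {f. (\<forall>i<n. f i \<in> carrier M) \<and> (\<forall>i\<ge>n. f i = zero M)},
               add = (\<lambda>f g i. add M (f i) (g i)),
               zero = (\<lambda>i. zero M),
               smul = (\<lambda>f r i. if i < n then smul M (f i) r else zero M)\<rparr>"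

definition rickart :: "('m, 'r) rmod \<Rightarrow> bool" where
  "rickart M \<longleftrightarrow> (\<forall>\<phi>\<in>hom M M. direct_summand M (kernel M M \<phi>))"

definition finite_sigma_rickart :: "('m, 'r) rmod \<Rightarrow> bool" where
  "finite_sigma_rickart M \<longleftrightarrow> (\<forall>n>0. rickart (dpow M n))"

text \<open>A is N-Rickart.\<close>
definition rel_rickart :: "('m, 'r) rmod \<Rightarrow> ('n, 'r) rmod \<Rightarrow> bool" where
  "rel_rickart A N \<longleftrightarrow> (\<forall>\<rho>\<in>hom A N. direct_summand A (kernel A N \<rho>))"

definition isomorphic :: "('m, 'r) rmod \<Rightarrow> ('n, 'r) rmod \<Rightarrow> bool" where
  "isomorphic M N \<longleftrightarrow> (\<exists>f\<in>hom M N. bij_betw f (carrier M) (carrier N))"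

definition in_add :: "('m, 'r) rmod \<Rightarrow> ('k, 'r) rmod \<Rightarrow> bool" where
  "in_add M K \<longleftrightarrow> (\<exists>n>0. \<exists>S. direct_summand (dpow M n) S \<and> isomorphic K (subm (dpow M n) S))"

definition fin_gen :: "('m, 'r) rmod \<Rightarrow> ('n, 'r) rmod \<Rightarrow> bool" where
  "fin_gen M N \<longleftrightarrow> (\<exists>n>0. \<exists>f\<in>hom (dpow M n) N. f ` carrier (dpow M n) = carrier N)"

end

theory Submission
  imports Defs
begin



lemma rm_zero: assumes "rmodule M" shows "zero M \<in> carrier M"
  using assms unfolding rmodule_def by meson

lemma rm_add_closed: assumes "rmodule M" shows "x \<in> carrier M \<Longrightarrow> y \<in> carrier M \<Longrightarrow> add M x y \<in> carrier M"
  using assms unfolding rmodule_def by meson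

lemma rm_smul_closed: assumes "rmodule M" shows "x \<in> carrier M \<Longrightarrow> smul M x r \<in> carrier M"
  using assms unfolding rmodule_def by meson

lemma rm_assoc: assumes "rmodule M" shows "x \<in> carrier M \<Longrightarrow> y \<in> carrier M \<Longrightarrow> z \<in> carrier M \<Longrightarrow> add M (add M x y) z = add M x (add M y z)"
  using assms unfolding rmodule_def by meson

lemma rm_comm: assumes "rmodule M" shows "x \<in> carrier M \<Longrightarrow> y \<in> carrier M \<Longrightarrow> add M x y = add M y x"
  using assms unfolding rmodule_def by meson

lemma rm_zero_l: assumes "rmodule M" shows "x \<in> carrier M \<Longrightarrow> add M (zero M) x = x"
  using assms unfolding rmodule_def by meson

lemma rm_inv: assumes "rmodule M" shows "x \<in> carrier M \<Longrightarrow> \<exists>y\<in>carrier M. add M x y = zero M"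
  using assms unfolding rmodule_def by meson

lemma rm_distl: assumes "rmodule M" shows "x \<in> carrier M \<Longrightarrow> y \<in> carrier M \<Longrightarrow> smul M (add M x y) r = add M (smul M x r) (smul M y r)"
  using assms unfolding rmodule_def by meson

lemma rm_distr: assumes "rmodule M" shows "x \<in> carrier M \<Longrightarrow> smul M x (r + s) = add M (smul M x r) (smul M x s)"
  using assms unfolding rmodule_def by meson

lemma rm_smul_mult: assumes "rmodule M" shows "x \<in> carrier M \<Longrightarrow> smul M x (r * s) = smul M (smul M x r) s"
  using assms unfolding rmodule_def by meson

lemma rm_one: assumes "rmodule M" shows "x \<in> carrier M \<Longrightarrow> smul M x 1 = x"
  using assms unfolding rmodule_def by meson

lemma rm_lcomm: "rmodule M \<Longrightarrow> x \<in> carrier M \<Longrightarrow> y \<in> carrier M \<Longrightarrow> z \<in> carrier M \<Longrightarrow> add M x (add M y z) = add M y (add M x z)"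
  by (metis rm_assoc rm_comm)

lemma rm_zero_r: "rmodule M \<Longrightarrow> x \<in> carrier M \<Longrightarrow> add M x (zero M) = x"
  by (metis rm_comm rm_zero rm_zero_l)

lemma rm_cancel: assumes "rmodule M" "x \<in> carrier M" "y \<in> carrier M" "z \<in> carrier M" "add M x y = add M x z"
  shows "y = z"
proof -
  obtain w where w: "w \<in> carrier M" "add M x w = zero M" using rm_inv[OF assms(1,2)] by blast
  have "add M w (add M x y) = add M w (add M x z)" using assms by simp
  thus ?thesis using assms w by (metis rm_assoc rm_comm rm_zero_l)
qed

lemma rm_cancel_r: assumes "rmodule M" "x \<in> carrier M" "y \<in> carrier M" "z \<in> carrier M" "add M y x = add M z x"
  shows "y = z" using assms rm_cancel rm_comm by metis

lemma rm_smul_0: assumes "rmodule M" "x \<in> carrier M" shows "smul M x 0 = zero M"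
proof -
  have "add M (smul M x 0) (smul M x 0) = add M (smul M x 0) (zero M)"
    using assms by (metis add_0 rm_distr rm_smul_closed rm_zero_r)
  thus ?thesis using assms by (metis rm_cancel rm_smul_closed rm_zero)
qed

lemma rm_0_smul: assumes "rmodule M" shows "smul M (zero M) r = zero M"
proof -
  have "add M (smul M (zero M) r) (smul M (zero M) r) = add M (smul M (zero M) r) (zero M)"
    using assms by (metis rm_distl rm_zero rm_zero_l rm_smul_closed rm_zero_r)
  thus ?thesis using assms by (metis rm_cancel rm_smul_closed rm_zero)
qed

lemma rm_neg: assumes "rmodule M" "x \<in> carrier M" shows "add M x (smul M x (-1)) = zero M"
  using assms by (metis add.right_inverse rm_distr rm_one rm_smul_0)

lemma rm_neg': assumes "rmodule M" "x \<in> carrier M" shows "add M (smul M x (-1)) x = zero M"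
  using assms by (metis rm_neg rm_comm rm_smul_closed)

lemma rm_diff0: assumes "rmodule M" "x \<in> carrier M" "y \<in> carrier M" "add M x (smul M y (-1)) = zero M"
  shows "x = y"
proof -
  have "add M x (add M (smul M y (-1)) y) = add M (zero M) y" using assms
    by (metis rm_assoc rm_smul_closed)
  thus ?thesis using assms by (simp add: rm_neg' rm_zero_r rm_zero_l)
qed

lemma homD: assumes "f \<in> hom M N"
  shows "x \<in> carrier M \<Longrightarrow> f x \<in> carrier N"
  and "x \<in> carrier M \<Longrightarrow> y \<in> carrier M \<Longrightarrow> f (add M x y) = add N (f x) (f y)"
  and "x \<in> carrier M \<Longrightarrow> f (smul M x r) = smul N (f x) r"
  using assms unfolding hom_def by auto

lemma hom_zero: assumes "rmodule M" "rmodule N" "f \<in> hom M N" shows "f (zero M) = zero N"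
proof -
  have z: "zero M \<in> carrier M" "f (zero M) \<in> carrier N" using assms by (auto simp: rm_zero homD)
  have "f (zero M) = f (add M (zero M) (zero M))" using assms z by (simp add: rm_zero_l)
  also have "\<dots> = add N (f (zero M)) (f (zero M))" using homD(2)[OF assms(3) z(1) z(1)] .
  finally have "add N (f (zero M)) (f (zero M)) = add N (f (zero M)) (zero N)"
    using assms z by (simp add: rm_zero_r)
  thus ?thesis using rm_cancel[OF assms(2) z(2) z(2) rm_zero[OF assms(2)]] by simp
qed

lemma hom_comp: "f \<in> hom M N \<Longrightarrow> g \<in> hom N P \<Longrightarrow> (g \<circ> f) \<in> hom M P"
  unfolding hom_def by auto

lemma subm_simps[simp]: "carrier (subm M S) = S" "add (subm M S) = add M" "zero (subm M S) = zero M"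
  "smul (subm M S) = smul M" by (simp_all add: subm_def)

lemma dpow_simps[simp]:
  "carrier (dpow M n) = {f. (\<forall>i<n. f i \<in> carrier M) \<and> (\<forall>i\<ge>n. f i = zero M)}"
  "add (dpow M n) = (\<lambda>f g i. add M (f i) (g i))"
  "zero (dpow M n) = (\<lambda>i. zero M)"
  "smul (dpow M n) = (\<lambda>f r i. if i < n then smul M (f i) r else zero M)"
  by (simp_all add: dpow_def)




lemma rmodule_dpow: assumes M: "rmodule M" shows "rmodule (dpow M n)"
proof -
  note z = rm_zero[OF M] and zl = rm_zero_l[OF M]
  have zz: "add M (zero M) (zero M) = zero M" using zl z by simp
  note ac = rm_add_closed[OF M] and sc = rm_smul_closed[OF M]
  let ?C = "carrier (dpow M n)"
  have mem: "f \<in> ?C \<longleftrightarrow> (\<forall>i<n. f i \<in> carrier M) \<and> (\<forall>i\<ge>n. f i = zero M)" for f by simp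
  show ?thesis unfolding rmodule_def
  proof (intro conjI ballI allI)
    show "zero (dpow M n) \<in> ?C" using z by simp
  next
    fix x y assume "x \<in> ?C" "y \<in> ?C" thus "add (dpow M n) x y \<in> ?C" using ac zz by auto
  next
    fix x r assume "x \<in> ?C" thus "smul (dpow M n) x r \<in> ?C" using sc by auto
  next
    fix x y w assume "x \<in> ?C" "y \<in> ?C" "w \<in> ?C"
    thus "add (dpow M n) (add (dpow M n) x y) w = add (dpow M n) x (add (dpow M n) y w)"
      by (auto simp: fun_eq_iff) (metis M linorder_not_le rm_assoc zz)
  next
    fix x y assume "x \<in> ?C" "y \<in> ?C"
    thus "add (dpow M n) x y = add (dpow M n) y x"
      by (auto simp: fun_eq_iff) (metis M linorder_not_le rm_comm)
  next
    fix x assume "x \<in> ?C" thus "add (dpow M n) (zero (dpow M n)) x = x"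
      by (auto simp: fun_eq_iff) (metis zl zz linorder_not_le)
  next
    fix x assume x: "x \<in> ?C"
    show "\<exists>y\<in>?C. add (dpow M n) x y = zero (dpow M n)"
    proof (rule bexI[where x="\<lambda>i. if i < n then smul M (x i) (-1) else zero M"])
      show "(\<lambda>i. if i < n then smul M (x i) (- 1) else zero M) \<in> ?C" using x sc z by auto
      show "add (dpow M n) x (\<lambda>i. if i < n then smul M (x i) (- 1) else zero M) = zero (dpow M n)"
        using x by (auto simp: fun_eq_iff rm_neg[OF M] zz)
    qed
  next
    fix x y r assume "x \<in> ?C" "y \<in> ?C"
    thus "smul (dpow M n) (add (dpow M n) x y) r = add (dpow M n) (smul (dpow M n) x r) (smul (dpow M n) y r)"
      by (auto simp: fun_eq_iff rm_distl[OF M] zz)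
  next
    fix x r s assume "x \<in> ?C"
    thus "smul (dpow M n) x (r + s) = add (dpow M n) (smul (dpow M n) x r) (smul (dpow M n) x s)"
      by (auto simp: fun_eq_iff rm_distr[OF M] zz)
  next
    fix x r s assume "x \<in> ?C"
    thus "smul (dpow M n) x (r * s) = smul (dpow M n) (smul (dpow M n) x r) s"
      by (auto simp: fun_eq_iff rm_smul_mult[OF M])
  next
    fix x assume "x \<in> ?C" thus "smul (dpow M n) x 1 = x"
      by (auto simp: fun_eq_iff rm_one[OF M])
  qed
qed



lemma submoduleD: assumes "submodule M S"
  shows "S \<subseteq> carrier M" "zero M \<in> S" "x \<in> S \<Longrightarrow> y \<in> S \<Longrightarrow> add M x y \<in> S" "x \<in> S \<Longrightarrow> smul M x r \<in> S"
  using assms unfolding submodule_def by auto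

lemma rm_negc1: "rmodule M \<Longrightarrow> x \<in> carrier M \<Longrightarrow> y \<in> carrier M \<Longrightarrow> add M x (add M (smul M x (-1)) y) = y"
  using rm_assoc[of M x "smul M x (-1)" y] rm_neg[of M x] rm_smul_closed[of M x "-1"] rm_zero_l[of M y] by simp
lemma rm_negc2: "rmodule M \<Longrightarrow> x \<in> carrier M \<Longrightarrow> y \<in> carrier M \<Longrightarrow> add M (smul M x (-1)) (add M x y) = y"
  using rm_assoc[of M "smul M x (-1)" x y] rm_neg'[of M x] rm_smul_closed[of M x "-1"] rm_zero_l[of M y] by simp

lemma decomp_unique:
  assumes M: "rmodule M" and S: "submodule M S" and T: "submodule M T" and ST: "S \<inter> T = {zero M}"
  and s: "s \<in> S" "s' \<in> S" and t: "t \<in> T" "t' \<in> T" and eq: "add M s t = add M s' t'"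
  shows "s = s' \<and> t = t'"
proof -
  have C: "s \<in> carrier M" "s' \<in> carrier M" "t \<in> carrier M" "t' \<in> carrier M"
    using s t submoduleD(1)[OF S] submoduleD(1)[OF T] by auto
  note ac = rm_add_closed[OF M] and sc = rm_smul_closed[OF M]
  define u where "u = add M s (smul M s' (-1))"
  define v where "v = add M t' (smul M t (-1))"
  have uS: "u \<in> S" unfolding u_def using s by (intro submoduleD(3,4)[OF S]) 
  have vT: "v \<in> T" unfolding v_def using t by (intro submoduleD(3,4)[OF T])
  have h1: "add M (smul M s' (-1)) (add M s' t) = t" using C by (simp add: rm_negc2[OF M])
  have "add M u (add M s' t) = add M s t"
    unfolding u_def using C h1 by (simp add: rm_assoc[OF M] ac sc)
  also have "\<dots> = add M s' t'" by (rule eq)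
  also have "\<dots> = add M v (add M s' t)"
  proof -
    have h: "add M (smul M t (-1)) (add M s' t) = s'" using C by (simp add: rm_comm[OF M, of s' t] rm_negc2[OF M])
    have "add M v (add M s' t) = add M t' (add M (smul M t (-1)) (add M s' t))"
      unfolding v_def using C by (simp add: rm_assoc[OF M] ac sc)
    also have "\<dots> = add M s' t'" using h C by (simp add: rm_comm[OF M, of t' s'])
    finally show ?thesis by simp
  qed
  finally have eq2: "add M u (add M s' t) = add M v (add M s' t)" .
  have "u = v" using rm_cancel_r[OF M _ _ _ eq2] C by (simp add: u_def v_def ac sc)
  hence "u = zero M" using uS vT ST by auto
  hence ss: "s = s'" using rm_diff0[OF M] C unfolding u_def by blast
  moreover have "t = t'" using eq C ss rm_cancel[OF M] by blast
  ultimately show ?thesis by simp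
qed



lemma kernel_sub: assumes M: "rmodule M" and N: "rmodule N" and f: "f \<in> hom M N"
  shows "submodule M (kernel M N f)"
  unfolding submodule_def kernel_def
proof (intro conjI ballI allI)
  show "zero M \<in> {x \<in> carrier M. f x = zero N}" using hom_zero[OF M N f] rm_zero[OF M] by simp
next
  fix x y assume x: "x \<in> {x \<in> carrier M. f x = zero N}" and y: "y \<in> {x \<in> carrier M. f x = zero N}"
  have "f (add M x y) = add N (zero N) (zero N)" using homD(2)[OF f, of x y] x y by simp
  thus "add M x y \<in> {x \<in> carrier M. f x = zero N}" using x y rm_add_closed[OF M, of x y] rm_zero_l[OF N] rm_zero[OF N] by simp
next
  fix x r assume x: "x \<in> {x \<in> carrier M. f x = zero N}"
  have "f (smul M x r) = smul N (zero N) r" using homD(3)[OF f, of x r] x by simp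
  thus "smul M x r \<in> {x \<in> carrier M. f x = zero N}" using x rm_smul_closed[OF M, of x r] rm_0_smul[OF N] by simp
qed auto

lemma image_sub: assumes X: "rmodule X" and Y: "rmodule Y" and r: "r \<in> hom X Y" and T: "submodule X T"
  shows "submodule Y (r ` T)"
  unfolding submodule_def
proof (intro conjI ballI allI)
  show "r ` T \<subseteq> carrier Y" using submoduleD(1)[OF T] homD(1)[OF r] by auto
  show "zero Y \<in> r ` T" using hom_zero[OF X Y r, symmetric] submoduleD(2)[OF T] by auto
next
  fix x y assume "x \<in> r ` T" "y \<in> r ` T"
  then obtain a b where ab: "a \<in> T" "b \<in> T" and xy: "x = r a" "y = r b" by auto
  have "add Y x y = r (add X a b)" using xy homD(2)[OF r, of a b] ab submoduleD(1)[OF T] by (simp add: subset_iff)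
  thus "add Y x y \<in> r ` T" using submoduleD(3)[OF T ab] by simp
next
  fix x c assume "x \<in> r ` T"
  then obtain a where a: "a \<in> T" and xa: "x = r a" by auto
  have "smul Y x c = r (smul X a c)" using xa homD(3)[OF r, of a c] a submoduleD(1)[OF T] by (simp add: subset_iff)
  thus "smul Y x c \<in> r ` T" using submoduleD(4)[OF T a] by simp
qed

lemma summand_pullback:
  assumes X: "rmodule X" and Y: "rmodule Y" and r: "r \<in> hom X Y" and i: "i \<in> hom Y X"
  and ri: "\<And>y. y \<in> carrier Y \<Longrightarrow> r (i y) = y" and S': "submodule Y S'"
  and ds: "direct_summand X {x \<in> carrier X. r x \<in> S'}"
  shows "direct_summand Y S'"
proof -
  obtain T where T: "submodule X T" and ST: "{x \<in> carrier X. r x \<in> S'} \<inter> T = {zero X}"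
    and sp: "\<forall>x\<in>carrier X. \<exists>s\<in>{x \<in> carrier X. r x \<in> S'}. \<exists>t\<in>T. x = add X s t"
    using ds unfolding direct_summand_def by blast
  have TC: "T \<subseteq> carrier X" using submoduleD(1)[OF T] .
  show ?thesis unfolding direct_summand_def
  proof (intro conjI exI[where x="r ` T"])
    show "submodule Y S'" by fact
    show "submodule Y (r ` T)" by (rule image_sub[OF X Y r T])
    show "S' \<inter> r ` T = {zero Y}"
    proof
      show "S' \<inter> r ` T \<subseteq> {zero Y}"
      proof
        fix y assume "y \<in> S' \<inter> r ` T"
        then obtain t where t: "t \<in> T" "y = r t" "r t \<in> S'" by auto
        hence "t \<in> {x \<in> carrier X. r x \<in> S'} \<inter> T" using TC by auto
        hence "t = zero X" using ST by auto
        thus "y \<in> {zero Y}" using t hom_zero[OF X Y r] by simp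
      qed
      show "{zero Y} \<subseteq> S' \<inter> r ` T" using submoduleD(2)[OF S'] submoduleD(2)[OF T] hom_zero[OF X Y r]
        by (metis Int_iff empty_subsetI image_eqI insert_subset)
    qed
    show "\<forall>y\<in>carrier Y. \<exists>s\<in>S'. \<exists>t\<in>r ` T. y = add Y s t"
    proof
      fix y assume y: "y \<in> carrier Y"
      hence "i y \<in> carrier X" using homD(1)[OF i] by auto
      then obtain s t where s: "s \<in> carrier X" "r s \<in> S'" and t: "t \<in> T" and e: "i y = add X s t" using sp by blast
      have "y = r (add X s t)" using ri[OF y] e by simp
      also have "\<dots> = add Y (r s) (r t)" using homD(2)[OF r s(1)] t TC by auto
      finally show "\<exists>s\<in>S'. \<exists>t\<in>r ` T. y = add Y s t" using s t by blast
    qed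
  qed
qed

lemma summand_proj: assumes X: "rmodule X" and ds: "direct_summand X S"
  shows "\<exists>p\<in>hom X (subm X S). p ` carrier X = S"
proof -
  obtain T where S: "submodule X S" and T: "submodule X T" and ST: "S \<inter> T = {zero X}"
    and sp: "\<forall>x\<in>carrier X. \<exists>s\<in>S. \<exists>t\<in>T. x = add X s t"
    using ds unfolding direct_summand_def by blast
  note SC = submoduleD(1)[OF S] and TC = submoduleD(1)[OF T]
  define p where "p x = (SOME s. s \<in> S \<and> (\<exists>t\<in>T. x = add X s t))" for x
  have pS: "p x \<in> S \<and> (\<exists>t\<in>T. x = add X (p x) t)" if "x \<in> carrier X" for x
    unfolding p_def by (rule someI_ex) (use sp that in blast)
  have pu: "p x = s" if "s \<in> S" "t \<in> T" "x = add X s t" for x s t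
  proof -
    have x: "x \<in> carrier X" unfolding that(3) using that(1,2) SC TC rm_add_closed[OF X] by auto
    obtain t' where t': "t' \<in> T" "x = add X (p x) t'" using pS[OF x] by blast
    have e: "add X (p x) t' = add X s t" using trans[OF sym[OF t'(2)] that(3)] .
    show ?thesis using decomp_unique[OF X S T ST pS[OF x, THEN conjunct1] that(1) t'(1) that(2) e] by simp
  qed
  show ?thesis
  proof (intro bexI[where x=p] equalityI subsetI)
    show "p \<in> hom X (subm X S)" unfolding hom_def
    proof (intro CollectI conjI ballI allI)
      fix x assume "x \<in> carrier X" thus "p x \<in> carrier (subm X S)" using pS[THEN conjunct1] by simp
    next
      fix x y assume x: "x \<in> carrier X" and y: "y \<in> carrier X"
      obtain t where t: "t \<in> T" "x = add X (p x) t" using pS[OF x] by blast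
      obtain u where u: "u \<in> T" "y = add X (p y) u" using pS[OF y] by blast
      have px: "p x \<in> S" "p y \<in> S" using pS[OF x, THEN conjunct1] pS[OF y, THEN conjunct1] by auto
      have C: "p x \<in> carrier X" "p y \<in> carrier X" "t \<in> carrier X" "u \<in> carrier X" using px t(1) u(1) SC TC by auto
      have "add X (add X (p x) t) (add X (p y) u) = add X (add X (p x) (p y)) (add X t u)"
        using C by (simp add: rm_assoc[OF X] rm_add_closed[OF X] rm_lcomm[OF X, of t "p y"])
      hence ex: "add X x y = add X (add X (p x) (p y)) (add X t u)" by (simp only: t(2)[symmetric] u(2)[symmetric])
      show "p (add X x y) = add (subm X S) (p x) (p y)"
        using pu[OF submoduleD(3)[OF S px] submoduleD(3)[OF T t(1) u(1)] ex] by simp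
    next
      fix x c assume x: "x \<in> carrier X"
      obtain t where t: "t \<in> T" "x = add X (p x) t" using pS[OF x] by blast
      have px: "p x \<in> S" using pS[OF x, THEN conjunct1] by auto
      have "smul X (add X (p x) t) c = add X (smul X (p x) c) (smul X t c)"
        using t(1) px SC TC rm_distl[OF X, of "p x" t c] by auto
      hence ex: "smul X x c = add X (smul X (p x) c) (smul X t c)" by (simp only: t(2)[symmetric])
      show "p (smul X x c) = smul (subm X S) (p x) c"
        using pu[OF submoduleD(4)[OF S px] submoduleD(4)[OF T t(1)] ex] by simp
    qed
  next
    fix y assume "y \<in> p ` carrier X" thus "y \<in> S" using pS[THEN conjunct1] by auto
  next
    fix s assume s: "s \<in> S"
    have "add X s (zero X) = s" using s SC rm_zero_r[OF X] by auto
    hence "p s = s" using pu[OF s submoduleD(2)[OF T] sym] by blast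
    thus "s \<in> p ` carrier X" using s SC by (metis image_eqI subsetD)
  qed
qed



definition lo :: "('m,'r) rmod \<Rightarrow> nat \<Rightarrow> (nat \<Rightarrow> 'm) \<Rightarrow> nat \<Rightarrow> 'm" where
  "lo M a f = (\<lambda>i. if i < a then f i else zero M)"
definition hi :: "('m,'r) rmod \<Rightarrow> nat \<Rightarrow> nat \<Rightarrow> (nat \<Rightarrow> 'm) \<Rightarrow> nat \<Rightarrow> 'm" where
  "hi M a b f = (\<lambda>i. if i < b then f (a + i) else zero M)"
definition shift :: "('m,'r) rmod \<Rightarrow> nat \<Rightarrow> (nat \<Rightarrow> 'm) \<Rightarrow> nat \<Rightarrow> 'm" where
  "shift M a g = (\<lambda>i. if a \<le> i then g (i - a) else zero M)"

lemma lo_hom: assumes M: "rmodule M" and "a \<le> k" shows "lo M a \<in> hom (dpow M k) (dpow M a)"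
  using assms rm_zero[OF M] rm_zero_l[OF M] unfolding hom_def lo_def
  by (auto simp: fun_eq_iff)

lemma id_hom: assumes M: "rmodule M" and "a \<le> k" shows "(\<lambda>x. x) \<in> hom (dpow M a) (dpow M k)"
  using assms rm_0_smul[OF M] rm_zero[OF M] unfolding hom_def
  by (auto simp: fun_eq_iff) (metis not_le)

lemma hi_hom: assumes M: "rmodule M" shows "hi M a b \<in> hom (dpow M (a + b)) (dpow M b)"
  using assms rm_zero[OF M] rm_zero_l[OF M] unfolding hom_def hi_def
  by (auto simp: fun_eq_iff)

lemma shift_hom: assumes M: "rmodule M" shows "shift M a \<in> hom (dpow M b) (dpow M (a + b))"
  using assms rm_zero[OF M] rm_zero_l[OF M] rm_0_smul[OF M] unfolding hom_def shift_def
  by (auto simp: fun_eq_iff)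




lemma part1: assumes M: "rmodule M" and R: "rickart (dpow M (m + n))"
  shows "rel_rickart (dpow M m) (dpow M n)"
  unfolding rel_rickart_def
proof
  fix \<rho> assume \<rho>: "\<rho> \<in> hom (dpow M m) (dpow M n)"
  let ?X = "dpow M (m + n)" and ?Y = "dpow M m" and ?Z = "dpow M n"
  have X: "rmodule ?X" and Y: "rmodule ?Y" and Z: "rmodule ?Z" using rmodule_dpow[OF M] by auto
  have lo: "lo M m \<in> hom ?X ?Y" using lo_hom[OF M] by simp
  have idh: "(\<lambda>x. x) \<in> hom ?Y ?X" using id_hom[OF M] by simp
  have sh: "shift M m \<in> hom ?Z ?X" using shift_hom[OF M] .
  define \<phi> where "\<phi> = shift M m \<circ> \<rho> \<circ> lo M m"
  have \<phi>: "\<phi> \<in> hom ?X ?X" unfolding \<phi>_def by (rule hom_comp[OF lo hom_comp[OF \<rho> sh]])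
  have ker: "kernel ?X ?X \<phi> = {x \<in> carrier ?X. lo M m x \<in> kernel ?Y ?Z \<rho>}"
  proof (intro set_eqI iffI)
    fix x assume "x \<in> kernel ?X ?X \<phi>"
    hence x: "x \<in> carrier ?X" and e: "shift M m (\<rho> (lo M m x)) = zero ?X" unfolding kernel_def \<phi>_def by auto
    have lx: "lo M m x \<in> carrier ?Y" using homD(1)[OF lo x] .
    have "\<rho> (lo M m x) = zero ?Z"
    proof
      fix j
      have "shift M m (\<rho> (lo M m x)) (m + j) = zero M" using e by simp
      thus "\<rho> (lo M m x) j = zero ?Z j" unfolding shift_def by simp
    qed
    thus "x \<in> {x \<in> carrier ?X. lo M m x \<in> kernel ?Y ?Z \<rho>}" using x lx unfolding kernel_def by simp
  next
    fix x assume "x \<in> {x \<in> carrier ?X. lo M m x \<in> kernel ?Y ?Z \<rho>}"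
    hence x: "x \<in> carrier ?X" and e: "\<rho> (lo M m x) = zero ?Z" unfolding kernel_def by auto
    have "\<phi> x = zero ?X" unfolding \<phi>_def using e by (auto simp: shift_def fun_eq_iff)
    thus "x \<in> kernel ?X ?X \<phi>" using x unfolding kernel_def by simp
  qed
  have ds: "direct_summand ?X (kernel ?X ?X \<phi>)" using R \<phi> unfolding rickart_def by blast
  show "direct_summand ?Y (kernel ?Y ?Z \<rho>)"
    by (rule summand_pullback[OF X Y lo idh _ kernel_sub[OF Y Z \<rho>]])
       (use ds ker in \<open>auto simp: lo_def fun_eq_iff\<close>)
qed



lemma hom_add: assumes K: "rmodule K" and f: "f \<in> hom X K" and g: "g \<in> hom X K"
  shows "(\<lambda>x. add K (f x) (g x)) \<in> hom X K"
  unfolding hom_def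
proof (intro CollectI conjI ballI allI)
  fix x assume x: "x \<in> carrier X" thus "add K (f x) (g x) \<in> carrier K"
    using homD(1)[OF f x] homD(1)[OF g x] rm_add_closed[OF K] by blast
next
  fix x y assume x: "x \<in> carrier X" and y: "y \<in> carrier X"
  have C: "f x \<in> carrier K" "f y \<in> carrier K" "g x \<in> carrier K" "g y \<in> carrier K"
    using homD(1)[OF f] homD(1)[OF g] x y by auto
  show "add K (f (add X x y)) (g (add X x y)) = add K (add K (f x) (g x)) (add K (f y) (g y))"
    using C homD(2)[OF f x y] homD(2)[OF g x y]
    by (simp add: rm_assoc[OF K] rm_add_closed[OF K] rm_lcomm[OF K, of "g x" "f y"])
next
  fix x r assume x: "x \<in> carrier X"
  show "add K (f (smul X x r)) (g (smul X x r)) = smul K (add K (f x) (g x)) r"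
    using homD(1)[OF f x] homD(1)[OF g x] homD(3)[OF f x] homD(3)[OF g x] rm_distl[OF K] by simp
qed

lemma hom_neg: assumes K: "rmodule K" and g: "g \<in> hom X K"
  shows "(\<lambda>x. smul K (g x) (-1)) \<in> hom X K"
  unfolding hom_def
proof (intro CollectI conjI ballI allI)
  fix x assume x: "x \<in> carrier X" thus "smul K (g x) (-1) \<in> carrier K"
    using homD(1)[OF g x] rm_smul_closed[OF K] by blast
next
  fix x y assume x: "x \<in> carrier X" and y: "y \<in> carrier X"
  show "smul K (g (add X x y)) (-1) = add K (smul K (g x) (-1)) (smul K (g y) (-1))"
    using homD(1)[OF g x] homD(1)[OF g y] homD(2)[OF g x y] rm_distl[OF K] by simp
next
  fix x r assume x: "x \<in> carrier X"
  have gx: "g x \<in> carrier K" using homD(1)[OF g x] .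
  have "smul K (smul K (g x) r) (-1) = smul K (g x) (r * -1)" using rm_smul_mult[OF K gx, of r "-1"] by simp
  also have "\<dots> = smul K (g x) (-1 * r)" by simp
  also have "\<dots> = smul K (smul K (g x) (-1)) r" using rm_smul_mult[OF K gx, of "-1" r] by simp
  finally show "smul K (g (smul X x r)) (-1) = smul K (smul K (g x) (-1)) r"
    using homD(3)[OF g x] by simp
qed

lemma hom_subm_out: "f \<in> hom X (subm K A) \<Longrightarrow> A \<subseteq> carrier K \<Longrightarrow> f \<in> hom X K"
  unfolding hom_def by auto

lemma hom_subm_in: "f \<in> hom X K \<Longrightarrow> f ` carrier X \<subseteq> A \<Longrightarrow> f \<in> hom X (subm K A)"
  unfolding hom_def by auto

lemma part2:
  assumes M: "rmodule M" and RR: "\<And>m n. m > 0 \<Longrightarrow> n > 0 \<Longrightarrow> rel_rickart (dpow M m) (dpow M n)"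
  and K: "rmodule K" and iK: "in_add M K" and A: "submodule K A" and B: "submodule K B"
  and fA: "fin_gen M (subm K A)" and fB: "fin_gen M (subm K B)"
  shows "fin_gen M (subm K (A \<inter> B))"
proof -
  obtain k S e where k: "k > 0" and dS: "direct_summand (dpow M k) S"
    and e: "e \<in> hom K (subm (dpow M k) S)" and eb: "bij_betw e (carrier K) S"
    using iK unfolding in_add_def isomorphic_def by auto
  obtain a \<alpha> where a: "a > 0" and \<alpha>: "\<alpha> \<in> hom (dpow M a) (subm K A)" and \<alpha>s: "\<alpha> ` carrier (dpow M a) = A"
    using fA unfolding fin_gen_def by auto
  obtain b \<beta> where b: "b > 0" and \<beta>: "\<beta> \<in> hom (dpow M b) (subm K B)" and \<beta>s: "\<beta> ` carrier (dpow M b) = B"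
    using fB unfolding fin_gen_def by auto
  let ?X = "dpow M (a + b)" and ?D = "dpow M k"
  have X: "rmodule ?X" and D: "rmodule ?D" using rmodule_dpow[OF M] by auto
  have SC: "S \<subseteq> carrier ?D" using dS unfolding direct_summand_def submodule_def by auto
  have AC: "A \<subseteq> carrier K" and BC: "B \<subseteq> carrier K" using A B unfolding submodule_def by auto
  have eK: "e \<in> hom K ?D" using hom_subm_out[OF e SC] .
  have \<alpha>K: "\<alpha> \<in> hom (dpow M a) K" using hom_subm_out[OF \<alpha> AC] .
  have \<beta>K: "\<beta> \<in> hom (dpow M b) K" using hom_subm_out[OF \<beta> BC] .
  have lo: "lo M a \<in> hom ?X (dpow M a)" using lo_hom[OF M] by simp
  have hi: "hi M a b \<in> hom ?X (dpow M b)" using hi_hom[OF M] .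
  define \<gamma> where "\<gamma> x = e (add K (\<alpha> (lo M a x)) (smul K (\<beta> (hi M a b x)) (-1)))" for x
  have \<gamma>: "\<gamma> \<in> hom ?X ?D"
  proof -
    have "(\<lambda>x. add K ((\<alpha> \<circ> lo M a) x) (smul K ((\<beta> \<circ> hi M a b) x) (-1))) \<in> hom ?X K"
      by (intro hom_add[OF K] hom_neg[OF K] hom_comp[OF lo \<alpha>K] hom_comp[OF hi \<beta>K])
    from hom_comp[OF this eK] show ?thesis unfolding \<gamma>_def by (simp add: comp_def)
  qed
  define Ker where "Ker = kernel ?X ?D \<gamma>"
  have dK: "direct_summand ?X Ker" using RR[of "a + b" k] a k \<gamma> unfolding rel_rickart_def Ker_def by auto
  obtain p where p: "p \<in> hom ?X (subm ?X Ker)" and ps: "p ` carrier ?X = Ker"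
    using summand_proj[OF X dK] by blast
  have KC: "Ker \<subseteq> carrier ?X" unfolding Ker_def kernel_def by auto
  have pX: "p \<in> hom ?X ?X" using hom_subm_out[OF p KC] .
  define q where "q = \<alpha> \<circ> lo M a"
  have qK: "q \<in> hom ?X K" unfolding q_def by (rule hom_comp[OF lo \<alpha>K])
  have e0: "e (zero K) = zero ?D" using hom_zero[OF K D eK] .
  have einj: "inj_on e (carrier K)" using eb bij_betw_def by blast
  have qKer: "q ` Ker = A \<inter> B"
  proof (intro equalityI subsetI)
    fix y assume "y \<in> q ` Ker"
    then obtain x where x: "x \<in> Ker" and yx: "y = q x" by auto
    have xC: "x \<in> carrier ?X" and g0: "\<gamma> x = zero ?D" using x unfolding Ker_def kernel_def by auto
    have lx: "lo M a x \<in> carrier (dpow M a)" using homD(1)[OF lo xC] .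
    have hx: "hi M a b x \<in> carrier (dpow M b)" using homD(1)[OF hi xC] .
    let ?u = "\<alpha> (lo M a x)" and ?v = "\<beta> (hi M a b x)"
    have uA: "?u \<in> A" using homD(1)[OF \<alpha> lx] by simp
    have vB: "?v \<in> B" using homD(1)[OF \<beta> hx] by simp
    have uC: "?u \<in> carrier K" and vC: "?v \<in> carrier K" using uA vB AC BC by auto
    have wC: "add K ?u (smul K ?v (-1)) \<in> carrier K" using uC vC rm_add_closed[OF K] rm_smul_closed[OF K] by blast
    have "e (add K ?u (smul K ?v (-1))) = e (zero K)" using g0 e0 unfolding \<gamma>_def by simp
    hence "add K ?u (smul K ?v (-1)) = zero K" using inj_onD[OF einj _ wC rm_zero[OF K]] by blast
    hence "?u = ?v" using rm_diff0[OF K uC vC] by blast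
    thus "y \<in> A \<inter> B" using yx uA vB unfolding q_def by simp
  next
    fix y assume y: "y \<in> A \<inter> B"
    then obtain u v where u: "u \<in> carrier (dpow M a)" and yu: "y = \<alpha> u"
      and v: "v \<in> carrier (dpow M b)" and yv: "y = \<beta> v"
    proof -
      have "y \<in> \<alpha> ` carrier (dpow M a)" "y \<in> \<beta> ` carrier (dpow M b)" using y \<alpha>s \<beta>s by auto
      thus ?thesis using that by blast
    qed
    define x where "x = (\<lambda>i. if i < a then u i else v (i - a))"
    have xC: "x \<in> carrier ?X" using u v unfolding x_def by auto
    have lx: "lo M a x = u" using u unfolding x_def lo_def by (auto simp: fun_eq_iff)
    have hx: "hi M a b x = v" using v unfolding x_def hi_def by (auto simp: fun_eq_iff)
    have yC: "y \<in> carrier K" using y AC by auto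
    have "\<gamma> x = e (add K y (smul K y (-1)))" unfolding \<gamma>_def lx hx yu[symmetric] yv[symmetric] by simp
    also have "\<dots> = zero ?D" using rm_neg[OF K yC] e0 by simp
    finally have "x \<in> Ker" using xC unfolding Ker_def kernel_def by simp
    moreover have "q x = y" unfolding q_def using lx yu by simp
    ultimately show "y \<in> q ` Ker" by blast
  qed
  have img: "(q \<circ> p) ` carrier ?X = A \<inter> B" unfolding image_comp[symmetric] ps qKer ..
  have "(q \<circ> p) \<in> hom ?X (subm K (A \<inter> B))"
    by (rule hom_subm_in[OF hom_comp[OF pX qK]]) (use img in simp)
  hence "\<exists>f\<in>hom ?X (subm K (A \<inter> B)). f ` carrier ?X = carrier (subm K (A \<inter> B))"
    using img by (intro bexI[of _ "q \<circ> p"]) simp_all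
  thus ?thesis unfolding fin_gen_def using a by (intro exI[of _ "a + b"]) simp
qed



lemma in_add_self: assumes M: "rmodule M" shows "in_add M M"
proof -
  let ?D = "dpow M 1"
  have D: "rmodule ?D" using rmodule_dpow[OF M] .
  have sub: "submodule ?D (carrier ?D)" using D unfolding submodule_def rmodule_def by auto
  have subz: "submodule ?D {zero ?D}" using D rm_zero[OF D] rm_zero_l[OF D] rm_0_smul[OF D]
    unfolding submodule_def by auto
  have ds: "direct_summand ?D (carrier ?D)" unfolding direct_summand_def
    using sub subz rm_zero[OF D] rm_zero_r[OF D] by (intro conjI exI[of _ "{zero ?D}"]) auto
  define \<iota> where "\<iota> x = (\<lambda>i::nat. if i = 0 then x else zero M)" for x
  have h: "\<iota> \<in> hom M (subm ?D (carrier ?D))"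
    unfolding hom_def \<iota>_def using rm_add_closed[OF M] rm_smul_closed[OF M] rm_zero[OF M] rm_zero_l[OF M]
    by (auto simp: fun_eq_iff)
  have b: "bij_betw \<iota> (carrier M) (carrier ?D)"
    unfolding bij_betw_def
  proof
    show "inj_on \<iota> (carrier M)"
    proof (rule inj_onI)
      fix x y assume "\<iota> x = \<iota> y" hence "\<iota> x 0 = \<iota> y 0" by simp
      thus "x = y" unfolding \<iota>_def by simp
    qed
    show "\<iota> ` carrier M = carrier ?D"
    proof (intro equalityI subsetI)
      fix f assume "f \<in> \<iota> ` carrier M" thus "f \<in> carrier ?D" unfolding \<iota>_def by auto
    next
      fix f assume f: "f \<in> carrier ?D"
      hence "f = \<iota> (f 0)" unfolding \<iota>_def by (auto simp: fun_eq_iff)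
      moreover have "f 0 \<in> carrier M" using f by auto
      ultimately show "f \<in> \<iota> ` carrier M" by blast
    qed
  qed
  show ?thesis unfolding in_add_def isomorphic_def
    using ds h b by (intro exI[of _ 1]) auto
qed

theorem mainTheorem2:
  fixes M :: "('m, 'r::ring_1) rmod"
  assumes "rmodule M" and "finite_sigma_rickart M"
  shows "(\<forall>m n. m > 0 \<and> n > 0 \<longrightarrow> rel_rickart (dpow M m) (dpow M n))
       \<and> (\<forall>K :: ('k, 'r) rmod. rmodule K \<and> in_add M K \<longrightarrow>
            (\<forall>A B. submodule K A \<and> submodule K B \<and> fin_gen M (subm K A) \<and> fin_gen M (subm K B)
                   \<longrightarrow> fin_gen M (subm K (A \<inter> B))))
       \<and> (\<forall>A B. submodule M A \<and> submodule M B \<and> fin_gen M (subm M A) \<and> fin_gen M (subm M B)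
                   \<longrightarrow> fin_gen M (subm M (A \<inter> B)))"
proof -
  have RR: "rel_rickart (dpow M m) (dpow M n)" if "m > 0" "n > 0" for m n
    using part1[OF assms(1)] assms(2) that unfolding finite_sigma_rickart_def by auto
  have P2: "fin_gen M (subm K (A \<inter> B))" if "rmodule K" "in_add M K" "submodule K A" "submodule K B"
     "fin_gen M (subm K A)" "fin_gen M (subm K B)" for K :: "('k, 'r) rmod" and A B
    by (rule part2[OF assms(1) RR that])
  have P3: "fin_gen M (subm M (A \<inter> B))" if "submodule M A" "submodule M B"
     "fin_gen M (subm M A)" "fin_gen M (subm M B)" for A B
    by (rule part2[OF assms(1) RR assms(1) in_add_self[OF assms(1)] that])
  show ?thesis using RR P2 P3 by blast
qed

end
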